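(* Let $f:[0,1]\to\mathbb{R}$ be bounded and let $0<a<b<1$. Assume that $f(t)=c$ for all $t\in(a,b)$, for some real constant $c$. Then for every $n\in\mathbb{N}$ and every $x\in(a,b)$, \[ |B_nf(x)-f(x)|\leq \|f-c\|\left(e^{-nr(x,a)}+e^{-nr(x,b)}\right). \]
   Context: For a bounded function $f:[0,1]\to\mathbb{R}$, $\|f\|=\sup_{t\in[0,1]}|f(t)|$, and $\|f-c\|$ is the supremum norm of $t\mapsto f(t)-c$. The $n$th Bernstein polynomial of $f$ is $B_nf(x)=\sum_{j=0}^n f(j/n)\binom{n}{j}x^j(1-x)^{n-j}$, $x\in[0,1]$. For $x,\theta\in(0,1)$, $r(x,\theta)=\theta\log\frac{\theta}{x}+(1-\theta)\log\frac{1-\theta}{1-x}$ (the Kullback–Leibler divergence between Bernoulli distributions with success probabilities $\theta$ and $x$). *)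

theory Defs
  imports "HOL-Analysis.Analysis"
begin

definition bernstein_op :: "nat \<Rightarrow> (real \<Rightarrow> real) \<Rightarrow> real \<Rightarrow> real" where
  "bernstein_op n f x = (\<Sum>j\<le>n. f (real j / real n) * real (n choose j) * x ^ j * (1 - x) ^ (n - j))"

definition supnorm01 :: "(real \<Rightarrow> real) \<Rightarrow> real" where
  "supnorm01 f = (SUP t\<in>{0..1}. \<bar>f t\<bar>)"

definition kl_bern :: "real \<Rightarrow> real \<Rightarrow> real" where
  "kl_bern x \<theta> = \<theta> * ln (\<theta> / x) + (1 - \<theta>) * ln ((1 - \<theta>) / (1 - x))"

end

theory Submission
  imports Defs
begin

lemma kl_identity:
  assumes x: "0 < x" "x < 1" and t: "0 < t" "t < 1"
  defines "s \<equiv> t * (1 - x) / (x * (1 - t))"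
  shows "s powr (- t) * (x * s + (1 - x)) = exp (- kl_bern x t)"
proof -
  have sp: "s > 0" using x t by (simp add: s_def)
  have e: "x * s + (1 - x) = (1 - x) / (1 - t)" using x t
    by (simp add: s_def field_simps)
  have lns: "ln s = ln t + ln (1 - x) - ln x - ln (1 - t)"
    using x t by (simp add: s_def ln_div ln_mult)
  have "ln (s powr (- t) * ((1 - x) / (1 - t))) = - t * ln s + ln (1 - x) - ln (1 - t)"
    using x t sp by (simp add: ln_mult ln_div ln_powr)
  also have "\<dots> = - kl_bern x t"
    unfolding kl_bern_def lns using x t by (simp add: ln_div algebra_simps)
  finally have "ln (s powr (- t) * ((1 - x) / (1 - t))) = - kl_bern x t" .
  hence "exp (ln (s powr (- t) * ((1 - x) / (1 - t)))) = exp (- kl_bern x t)" by simp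
  moreover have "s powr (- t) * ((1 - x) / (1 - t)) > 0" using sp x t by simp
  ultimately show ?thesis unfolding e by (metis exp_ln)
qed

lemma chernoff:
  assumes x: "0 < x" "x < 1" and t: "0 < t" "t < 1"
  and S: "S \<subseteq> {..n}"
  and one: "\<And>j. j \<in> S \<Longrightarrow> 1 \<le> (t * (1 - x) / (x * (1 - t))) powr (real j - real n * t)"
  shows "(\<Sum>j\<in>S. real (n choose j) * x ^ j * (1 - x) ^ (n - j)) \<le> exp (- real n * kl_bern x t)"
proof -
  define s where "s = t * (1 - x) / (x * (1 - t))"
  have sp: "s > 0" using x t by (simp add: s_def)
  define p where "p j = real (n choose j) * x ^ j * (1 - x) ^ (n - j)" for j
  have pnn: "p j \<ge> 0" for j using x by (simp add: p_def)
  have fin: "finite S" using S finite_subset by blast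
  have "(\<Sum>j\<in>S. p j) \<le> (\<Sum>j\<in>S. p j * s powr (real j - real n * t))"
    apply (rule sum_mono) using one pnn unfolding s_def
    by (metis mult.right_neutral mult_left_mono)
  also have "\<dots> \<le> (\<Sum>j\<le>n. p j * s powr (real j - real n * t))"
    apply (rule sum_mono2) using S pnn sp by auto
  also have "\<dots> = (\<Sum>j\<le>n. s powr (- real n * t) * (real (n choose j) * (x * s) ^ j * (1 - x) ^ (n - j)))"
  proof (rule sum.cong)
    fix j assume "j \<in> {..n}"
    have "s powr (real j - real n * t) = s powr (- real n * t) * s ^ j"
      using sp by (simp add: powr_diff powr_realpow[symmetric] powr_minus divide_inverse)
    thus "p j * s powr (real j - real n * t) = s powr (- real n * t) * (real (n choose j) * (x * s) ^ j * (1 - x) ^ (n - j))"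
      by (simp add: p_def power_mult_distrib)
  qed simp
  also have "\<dots> = s powr (- real n * t) * (x * s + (1 - x)) ^ n"
    by (simp add: binomial_ring sum_distrib_left mult_ac)
  also have "\<dots> = (s powr (- t) * (x * s + (1 - x))) ^ n"
  proof -
    have "s powr (- real n * t) = (s powr (- t)) ^ n"
      using sp by (simp add: powr_realpow[symmetric] powr_powr mult_ac)
    thus ?thesis by (simp add: power_mult_distrib)
  qed
  also have "\<dots> = exp (- kl_bern x t) ^ n"
    using kl_identity[OF x t] by (simp add: s_def)
  also have "\<dots> = exp (- real n * kl_bern x t)"
    by (simp add: exp_of_nat_mult[symmetric])
  finally show ?thesis by (simp add: p_def)
qed

theorem theorem1:
  fixes f :: "real \<Rightarrow> real" and a b c :: real
  assumes bdd: "bounded (f ` {0..1})"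
    and ab: "0 < a" "a < b" "b < 1"
    and const: "\<And>t. t \<in> {a<..<b} \<Longrightarrow> f t = c"
  shows "\<forall>n::nat. \<forall>x\<in>{a<..<b}.
    \<bar>bernstein_op n f x - f x\<bar>
      \<le> supnorm01 (\<lambda>t. f t - c) * (exp (- real n * kl_bern x a) + exp (- real n * kl_bern x b))"
proof (intro allI ballI)
  fix n :: nat and x assume xab: "x \<in> {a<..<b}"
  hence x: "0 < x" "x < 1" "a < x" "x < b" using ab by auto
  define M where "M = supnorm01 (\<lambda>t. f t - c)"
  obtain B where B: "\<And>y. y \<in> f ` {0..1} \<Longrightarrow> norm y \<le> B" using bdd bounded_iff by metis
  have bddM: "bdd_above ((\<lambda>t. \<bar>f t - c\<bar>) ` {0..1})"
    apply (rule bdd_aboveI[where M="B + \<bar>c\<bar>"]) using B by fastforce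
  have Mb: "\<bar>f t - c\<bar> \<le> M" if "t \<in> {0..1}" for t
    unfolding M_def supnorm01_def by (rule cSUP_upper[OF that bddM])
  have M0: "M \<ge> 0" using Mb[of 0] by simp
  have fx: "f x = c" using const xab by blast
  define p where "p j = real (n choose j) * x ^ j * (1 - x) ^ (n - j)" for j
  have pnn: "p j \<ge> 0" for j using x by (simp add: p_def)
  have e1: "0 < exp (- real n * kl_bern x a)" "0 < exp (- real n * kl_bern x b)" by simp_all
  show "\<bar>bernstein_op n f x - f x\<bar> \<le> M * (exp (- real n * kl_bern x a) + exp (- real n * kl_bern x b))"
  proof (cases "n = 0")
    case True
    have "\<bar>bernstein_op n f x - f x\<bar> = \<bar>f 0 - c\<bar>" using True fx by (simp add: bernstein_op_def)
    also have "\<dots> \<le> M" using Mb[of 0] by simp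
    also have "\<dots> \<le> M * (1 + 1)" using M0 by simp
    finally show ?thesis using True by simp
  next
    case False
    hence np: "real n > 0" by simp
    define L where "L = {j\<in>{..n}. real j / real n \<le> a}"
    define H where "H = {j\<in>{..n}. real j / real n \<ge> b}"
    have sum1: "(\<Sum>j\<le>n. p j) = 1"
      using binomial_ring[of x "1 - x" n] by (simp add: p_def mult_ac)
    have "bernstein_op n f x - f x = (\<Sum>j\<le>n. (f (real j / real n) - c) * p j)"
    proof -
      have "bernstein_op n f x = (\<Sum>j\<le>n. f (real j / real n) * p j)"
        unfolding bernstein_op_def p_def by (simp add: mult_ac)
      moreover have "f x = (\<Sum>j\<le>n. c * p j)"
        using fx sum1 by (simp add: sum_distrib_left[symmetric])
      ultimately show ?thesis by (simp add: left_diff_distrib sum_subtractf)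
    qed
    also have "\<bar>\<dots>\<bar> \<le> (\<Sum>j\<le>n. \<bar>f (real j / real n) - c\<bar> * p j)"
      by (rule order_trans[OF sum_abs]) (simp add: abs_mult pnn)
    also have "\<dots> \<le> (\<Sum>j\<le>n. M * (of_bool (j \<in> L) * p j + of_bool (j \<in> H) * p j))"
    proof (rule sum_mono)
      fix j assume j: "j \<in> {..n}"
      have j01: "real j / real n \<in> {0..1}" using j np by auto
      show "\<bar>f (real j / real n) - c\<bar> * p j \<le> M * (of_bool (j \<in> L) * p j + of_bool (j \<in> H) * p j)"
      proof (cases "j \<in> L \<or> j \<in> H")
        case True
        have "\<bar>f (real j / real n) - c\<bar> * p j \<le> M * p j"
          using Mb[OF j01] pnn by (simp add: mult_right_mono)
        also have "\<dots> \<le> M * (of_bool (j \<in> L) * p j + of_bool (j \<in> H) * p j)"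
          using True M0 pnn[of j] by (cases "j \<in> L"; cases "j \<in> H") auto
        finally show ?thesis .
      next
        case False
        hence "real j / real n \<in> {a<..<b}" using j unfolding L_def H_def by auto
        thus ?thesis using const False by simp
      qed
    qed
    also have "\<dots> = M * ((\<Sum>j\<in>L. p j) + (\<Sum>j\<in>H. p j))"
    proof -
      have "(\<Sum>j\<le>n. of_bool (j \<in> L) * p j) = (\<Sum>j\<in>L. p j)"
      proof -
        have "(\<Sum>j\<le>n. of_bool (j \<in> L) * p j) = (\<Sum>j\<le>n. if j \<in> L then p j else 0)"
          by (rule sum.cong) auto
        also have "\<dots> = sum p ({..n} \<inter> L)" by (simp add: sum.inter_restrict)
        also have "{..n} \<inter> L = L" unfolding L_def by auto
        finally show ?thesis .
      qed
      moreover have "(\<Sum>j\<le>n. of_bool (j \<in> H) * p j) = (\<Sum>j\<in>H. p j)"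
      proof -
        have "(\<Sum>j\<le>n. of_bool (j \<in> H) * p j) = (\<Sum>j\<le>n. if j \<in> H then p j else 0)"
          by (rule sum.cong) auto
        also have "\<dots> = sum p ({..n} \<inter> H)" by (simp add: sum.inter_restrict)
        also have "{..n} \<inter> H = H" unfolding H_def by auto
        finally show ?thesis .
      qed
      ultimately show ?thesis by (simp add: sum_distrib_left[symmetric] sum.distrib)
    qed
    also have "\<dots> \<le> M * (exp (- real n * kl_bern x a) + exp (- real n * kl_bern x b))"
    proof (rule mult_left_mono[OF add_mono M0])
      show "(\<Sum>j\<in>L. p j) \<le> exp (- real n * kl_bern x a)"
        unfolding p_def
      proof (rule chernoff)
        fix j assume "j \<in> L"
        hence le: "real j - real n * a \<le> 0" using np by (auto simp: L_def field_simps)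
        have s1: "a * (1 - x) / (x * (1 - a)) < 1" "0 < a * (1 - x) / (x * (1 - a))"
          using x ab by (auto simp: field_simps)
        show "1 \<le> (a * (1 - x) / (x * (1 - a))) powr (real j - real n * a)"
        proof -
          have "(1 / (a * (1 - x) / (x * (1 - a)))) powr (- (real j - real n * a)) \<ge> 1"
          proof (intro ge_one_powr_ge_zero)
            have gen: "1 \<le> 1 / y" if "0 < y" "y < 1" for y :: real using that by (simp add: le_divide_eq)
            show "1 \<le> 1 / (a * (1 - x) / (x * (1 - a)))" by (rule gen[OF s1(2) s1(1)])
          qed (use le in auto)
          moreover have h2: "(1 / y) powr (- e) = y powr e" if "0 < y" for y e :: real
            using that by (simp add: powr_minus powr_divide)
          ultimately show ?thesis using h2[OF s1(2), of "real j - real n * a"] by metis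
        qed
      qed (use x ab L_def in auto)
      show "(\<Sum>j\<in>H. p j) \<le> exp (- real n * kl_bern x b)"
        unfolding p_def
      proof (rule chernoff)
        fix j assume "j \<in> H"
        hence ge: "real j - real n * b \<ge> 0" using np by (auto simp: H_def field_simps)
        have s1: "b * (1 - x) / (x * (1 - b)) > 1"
          using x ab by (auto simp: field_simps)
        show "1 \<le> (b * (1 - x) / (x * (1 - b))) powr (real j - real n * b)"
          using s1 ge by (simp add: ge_one_powr_ge_zero)
      qed (use x ab H_def in auto)
    qed
    finally show ?thesis .
  qed
qed

end
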